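(* Let $(X,*,\circ)$ be a left skew brace and $R,S$ congruences on $X$. The following are equivalent: (1) $[I_R,I_S]=0$; (2) every element of $I_R$ commutes with every element of $I_S$ in $(X,* )$, every element of $I_R$ commutes with every element of $I_S$ in $(X,\circ)$, and $x*y^{-*}*z=x\circ y^{-\circ}\circ z$ for all $x,y,z\in X$ with $x\,R\,y$ and $y\,S\,z$; (3) $[R,S]=0$. In particular the category $\mathsf{SKB}$ of left skew braces satisfies (Huq=Smith).
   Context: A (left) skew brace is a triple $(A,*,\circ)$ with $(A,* )$ and $(A,\circ)$ groups such that $a\circ(b*c)=(a\circ b)*a^{-*}*(a\circ c)$ for all $a,b,c\in A$; $a^{-*}$, $a^{-\circ}$ denote inverses in $(A,* )$, $(A,\circ)$; the two groups share the identity $1$. Morphisms are maps that are homomorphisms for both operations; products are componentwise. A congruence on $X$ is an equivalence relation $R\subseteq X\times X$ that is a sub-skew brace of $X\times X$; $I_R=\{x\in X: x\,R\,1\}$. For sub-skew braces $U,V$ of $X$, $[U,V]=0$ means there exists a skew brace morphism $\varphi\colon U\times V\to X$ with $\varphi(u,1)=u$, $\varphi(1,v)=v$. For congruences $R,S$, let $R\times_X S=\{(x,y,z): xRy,\ ySz\}$ (a sub-skew brace of $X^3$); $[R,S]=0$ means there exists a skew brace morphism $p\colon R\times_XS\to X$ with $p(x,y,y)=x$ whenever $xRy$ and $p(y,y,z)=z$ whenever $ySz$. (Huq=Smith) means: for every skew brace $X$ and all congruences $R,S$ on $X$, $[I_R,I_S]=0$ implies $[R,S]=0$. *)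

theory Defs
  imports "HOL-Algebra.Group" "HOL-Library.FuncSet"
begin

record 'a skb =
  carr :: "'a set"
  star :: "'a \<Rightarrow> 'a \<Rightarrow> 'a"
  circ :: "'a \<Rightarrow> 'a \<Rightarrow> 'a"
  unit :: "'a"

definition add_grp :: "'a skb \<Rightarrow> 'a monoid" where
  "add_grp X = \<lparr>carrier = carr X, mult = star X, one = unit X\<rparr>"

definition mul_grp :: "'a skb \<Rightarrow> 'a monoid" where
  "mul_grp X = \<lparr>carrier = carr X, mult = circ X, one = unit X\<rparr>"

definition inv_star :: "'a skb \<Rightarrow> 'a \<Rightarrow> 'a" where
  "inv_star X a = inv\<^bsub>add_grp X\<^esub> a"

definition inv_circ :: "'a skb \<Rightarrow> 'a \<Rightarrow> 'a" where
  "inv_circ X a = inv\<^bsub>mul_grp X\<^esub> a"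

definition skew_brace :: "'a skb \<Rightarrow> bool" where
  "skew_brace X \<longleftrightarrow> group (add_grp X) \<and> group (mul_grp X) \<and>
     (\<forall>a\<in>carr X. \<forall>b\<in>carr X. \<forall>c\<in>carr X.
        circ X a (star X b c) = star X (star X (circ X a b) (inv_star X a)) (circ X a c))"

definition sub_skb :: "'a set \<Rightarrow> 'a skb \<Rightarrow> bool" where
  "sub_skb B X \<longleftrightarrow> B \<subseteq> carr X \<and> unit X \<in> B \<and>
     (\<forall>x\<in>B. \<forall>y\<in>B. star X x y \<in> B \<and> circ X x y \<in> B) \<and>
     (\<forall>x\<in>B. inv_star X x \<in> B \<and> inv_circ X x \<in> B)"

definition restr :: "'a skb \<Rightarrow> 'a set \<Rightarrow> 'a skb" where
  "restr X B = \<lparr>carr = B, star = star X, circ = circ X, unit = unit X\<rparr>"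

definition prod_skb :: "'a skb \<Rightarrow> 'b skb \<Rightarrow> ('a \<times> 'b) skb" where
  "prod_skb X Y = \<lparr>carr = carr X \<times> carr Y,
     star = (\<lambda>(a,b) (c,d). (star X a c, star Y b d)),
     circ = (\<lambda>(a,b) (c,d). (circ X a c, circ Y b d)),
     unit = (unit X, unit Y)\<rparr>"

definition skb_hom :: "'a skb \<Rightarrow> 'b skb \<Rightarrow> ('a \<Rightarrow> 'b) \<Rightarrow> bool" where
  "skb_hom X Y f \<longleftrightarrow> f \<in> carr X \<rightarrow> carr Y \<and>
     (\<forall>x\<in>carr X. \<forall>y\<in>carr X. f (star X x y) = star Y (f x) (f y) \<and>
                               f (circ X x y) = circ Y (f x) (f y))"

definition skb_congruence :: "'a skb \<Rightarrow> ('a \<times> 'a) set \<Rightarrow> bool" where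
  "skb_congruence X R \<longleftrightarrow> equiv (carr X) R \<and> sub_skb R (prod_skb X X)"

definition ideal_of :: "'a skb \<Rightarrow> ('a \<times> 'a) set \<Rightarrow> 'a set" where
  "ideal_of X R = {x \<in> carr X. (x, unit X) \<in> R}"

definition huq_zero :: "'a skb \<Rightarrow> 'a set \<Rightarrow> 'a set \<Rightarrow> bool" where
  "huq_zero X U V \<longleftrightarrow> (\<exists>\<phi>. skb_hom (prod_skb (restr X U) (restr X V)) X \<phi> \<and>
     (\<forall>u\<in>U. \<phi> (u, unit X) = u) \<and> (\<forall>v\<in>V. \<phi> (unit X, v) = v))"

definition fib_prod :: "('a \<times> 'a) set \<Rightarrow> ('a \<times> 'a) set \<Rightarrow> ('a \<times> 'a \<times> 'a) set" where
  "fib_prod R S = {(x, y, z). (x, y) \<in> R \<and> (y, z) \<in> S}"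

definition smith_zero :: "'a skb \<Rightarrow> ('a \<times> 'a) set \<Rightarrow> ('a \<times> 'a) set \<Rightarrow> bool" where
  "smith_zero X R S \<longleftrightarrow> (\<exists>p. skb_hom (restr (prod_skb X (prod_skb X X)) (fib_prod R S)) X p \<and>
     (\<forall>x y. (x, y) \<in> R \<longrightarrow> p (x, y, y) = x) \<and> (\<forall>y z. (y, z) \<in> S \<longrightarrow> p (y, y, z) = z))"

end

theory Submission
  imports Defs
begin

lemma add_grp_simps[simp]: "carrier (add_grp X) = carr X" "mult (add_grp X) = star X" "one (add_grp X) = unit X"
  by (simp_all add: add_grp_def)
lemma mul_grp_simps[simp]: "carrier (mul_grp X) = carr X" "mult (mul_grp X) = circ X" "one (mul_grp X) = unit X"
  by (simp_all add: mul_grp_def)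

locale SB = fixes X :: "'a skb" assumes sb: "skew_brace X"
begin

lemma A: "group (add_grp X)" and M: "group (mul_grp X)"
  and brace: "\<And>a b c. a\<in>carr X \<Longrightarrow> b\<in>carr X \<Longrightarrow> c\<in>carr X \<Longrightarrow>
        circ X a (star X b c) = star X (star X (circ X a b) (inv_star X a)) (circ X a c)"
  using sb by (auto simp: skew_brace_def)

lemma s_closed[simp]: "a\<in>carr X \<Longrightarrow> b\<in>carr X \<Longrightarrow> star X a b \<in> carr X"
  using group.is_monoid[OF A] monoid.m_closed by fastforce
lemma c_closed[simp]: "a\<in>carr X \<Longrightarrow> b\<in>carr X \<Longrightarrow> circ X a b \<in> carr X"
  using group.is_monoid[OF M] monoid.m_closed by fastforce
lemma u_closed[simp]: "unit X \<in> carr X"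
  using group.is_monoid[OF A] monoid.one_closed by fastforce
lemma is_closed[simp]: "a\<in>carr X \<Longrightarrow> inv_star X a \<in> carr X"
  unfolding inv_star_def using group.inv_closed[OF A] by fastforce
lemma ic_closed[simp]: "a\<in>carr X \<Longrightarrow> inv_circ X a \<in> carr X"
  unfolding inv_circ_def using group.inv_closed[OF M] by fastforce
lemma s_assoc: "a\<in>carr X \<Longrightarrow> b\<in>carr X \<Longrightarrow> c\<in>carr X \<Longrightarrow> star X (star X a b) c = star X a (star X b c)"
  using group.is_monoid[OF A] monoid.m_assoc by fastforce
lemma c_assoc: "a\<in>carr X \<Longrightarrow> b\<in>carr X \<Longrightarrow> c\<in>carr X \<Longrightarrow> circ X (circ X a b) c = circ X a (circ X b c)"
  using group.is_monoid[OF M] monoid.m_assoc by fastforce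
lemma s_l[simp]: "a\<in>carr X \<Longrightarrow> star X (unit X) a = a"
  using group.is_monoid[OF A] monoid.l_one by fastforce
lemma s_r[simp]: "a\<in>carr X \<Longrightarrow> star X a (unit X) = a"
  using group.is_monoid[OF A] monoid.r_one by fastforce
lemma c_l[simp]: "a\<in>carr X \<Longrightarrow> circ X (unit X) a = a"
  using group.is_monoid[OF M] monoid.l_one by fastforce
lemma c_r[simp]: "a\<in>carr X \<Longrightarrow> circ X a (unit X) = a"
  using group.is_monoid[OF M] monoid.r_one by fastforce
lemma s_invl[simp]: "a\<in>carr X \<Longrightarrow> star X (inv_star X a) a = unit X"
  unfolding inv_star_def using group.l_inv[OF A] by fastforce
lemma s_invr[simp]: "a\<in>carr X \<Longrightarrow> star X a (inv_star X a) = unit X"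
  unfolding inv_star_def using group.r_inv[OF A] by fastforce
lemma c_invl[simp]: "a\<in>carr X \<Longrightarrow> circ X (inv_circ X a) a = unit X"
  unfolding inv_circ_def using group.l_inv[OF M] by fastforce
lemma c_invr[simp]: "a\<in>carr X \<Longrightarrow> circ X a (inv_circ X a) = unit X"
  unfolding inv_circ_def using group.r_inv[OF M] by fastforce

end

lemma cong_props:
  assumes "skb_congruence X R"
  shows "R \<subseteq> carr X \<times> carr X" "\<And>x. x\<in>carr X \<Longrightarrow> (x,x)\<in>R" "\<And>x y. (x,y)\<in>R \<Longrightarrow> (y,x)\<in>R"
    "\<And>a b c d. (a,b)\<in>R \<Longrightarrow> (c,d)\<in>R \<Longrightarrow> (star X a c, star X b d)\<in>R"
    "\<And>a b c d. (a,b)\<in>R \<Longrightarrow> (c,d)\<in>R \<Longrightarrow> (circ X a c, circ X b d)\<in>R"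
proof -
  have e: "equiv (carr X) R" and s: "sub_skb R (prod_skb X X)"
    using assms by (auto simp: skb_congruence_def)
  show "R \<subseteq> carr X \<times> carr X" "\<And>x. x\<in>carr X \<Longrightarrow> (x,x)\<in>R" "\<And>x y. (x,y)\<in>R \<Longrightarrow> (y,x)\<in>R"
    using e unfolding equiv_def refl_on_def sym_def by blast+
  show "\<And>a b c d. (a,b)\<in>R \<Longrightarrow> (c,d)\<in>R \<Longrightarrow> (star X a c, star X b d)\<in>R"
    "\<And>a b c d. (a,b)\<in>R \<Longrightarrow> (c,d)\<in>R \<Longrightarrow> (circ X a c, circ X b d)\<in>R"
    using s unfolding sub_skb_def prod_skb_def by fastforce+
qed

context SB begin

lemma huq_cond:
  assumes cR: "skb_congruence X R" and cS: "skb_congruence X S"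
    and H: "huq_zero X (ideal_of X R) (ideal_of X S)"
  shows "(\<forall>a\<in>ideal_of X R. \<forall>b\<in>ideal_of X S. star X a b = star X b a) \<and>
            (\<forall>a\<in>ideal_of X R. \<forall>b\<in>ideal_of X S. circ X a b = circ X b a) \<and>
            (\<forall>x y z. (x, y) \<in> R \<and> (y, z) \<in> S \<longrightarrow>
               star X (star X x (inv_star X y)) z = circ X (circ X x (inv_circ X y)) z)"
proof -
  let ?I = "ideal_of X R" and ?J = "ideal_of X S"
  note R = cong_props[OF cR] and S = cong_props[OF cS]
  obtain f where hom: "skb_hom (prod_skb (restr X ?I) (restr X ?J)) X f"
    and f1: "\<forall>u\<in>?I. f (u, unit X) = u" and f2: "\<forall>v\<in>?J. f (unit X, v) = v"
    using H unfolding huq_zero_def by blast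
  let ?P = "prod_skb (restr X ?I) (restr X ?J)"
  have H2: "\<forall>x\<in>carr ?P. \<forall>y\<in>carr ?P. f (star ?P x y) = star X (f x) (f y) \<and> f (circ ?P x y) = circ X (f x) (f y)"
    using hom unfolding skb_hom_def by blast
  have cP: "carr ?P = ?I \<times> ?J" by (simp add: prod_skb_def restr_def)
  have sP: "star ?P (u,v) (u',v') = (star X u u', star X v v')" for u v u' v' by (simp add: prod_skb_def restr_def)
  have cP2: "circ ?P (u,v) (u',v') = (circ X u u', circ X v v')" for u v u' v' by (simp add: prod_skb_def restr_def)
  have hs: "\<And>u v u' v'. u\<in>?I \<Longrightarrow> v\<in>?J \<Longrightarrow> u'\<in>?I \<Longrightarrow> v'\<in>?J \<Longrightarrow>
      f (star X u u', star X v v') = star X (f (u,v)) (f (u',v'))"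
  proof -
    fix u v u' v' assume "u\<in>?I" "v\<in>?J" "u'\<in>?I" "v'\<in>?J"
    hence "(u,v) \<in> carr ?P" "(u',v') \<in> carr ?P" using cP by auto
    thus "f (star X u u', star X v v') = star X (f (u,v)) (f (u',v'))" using H2 sP by metis
  qed
  have hc: "\<And>u v u' v'. u\<in>?I \<Longrightarrow> v\<in>?J \<Longrightarrow> u'\<in>?I \<Longrightarrow> v'\<in>?J \<Longrightarrow>
      f (circ X u u', circ X v v') = circ X (f (u,v)) (f (u',v'))"
  proof -
    fix u v u' v' assume "u\<in>?I" "v\<in>?J" "u'\<in>?I" "v'\<in>?J"
    hence "(u,v) \<in> carr ?P" "(u',v') \<in> carr ?P" using cP by auto
    thus "f (circ X u u', circ X v v') = circ X (f (u,v)) (f (u',v'))" using H2 cP2 by metis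
  qed
  have I1: "unit X \<in> ?I" "unit X \<in> ?J" using R(2) S(2) by (auto simp: ideal_of_def)
  have IC: "\<And>u. u\<in>?I \<Longrightarrow> u \<in> carr X" "\<And>u. u\<in>?J \<Longrightarrow> u \<in> carr X" by (auto simp: ideal_of_def)
  have P1: "f (u,v) = star X u v" if "u\<in>?I" "v\<in>?J" for u v
    using hs[OF that(1) I1(2) I1(1) that(2)] I1 f1 f2 IC that by simp
  have P2: "f (u,v) = star X v u" if "u\<in>?I" "v\<in>?J" for u v
    using hs[OF I1(1) that(2) that(1) I1(2)] I1 f1 f2 IC that by simp
  have P3: "f (u,v) = circ X u v" if "u\<in>?I" "v\<in>?J" for u v
    using hc[OF that(1) I1(2) I1(1) that(2)] I1 f1 f2 IC that by simp
  have P4: "f (u,v) = circ X v u" if "u\<in>?I" "v\<in>?J" for u v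
    using hc[OF I1(1) that(2) that(1) I1(2)] I1 f1 f2 IC that by simp
  have third: "star X (star X x (inv_star X y)) z = circ X (circ X x (inv_circ X y)) z"
    if xy: "(x, y) \<in> R" and yz: "(y, z) \<in> S" for x y z
  proof -
    have c: "x \<in> carr X" "y \<in> carr X" "z \<in> carr X" using xy yz R(1) S(1) by auto
    define u where "u = circ X x (inv_circ X y)"
    define w where "w = star X (inv_star X y) z"
    have "(circ X x (inv_circ X y), circ X y (inv_circ X y)) \<in> R"
      using R(5)[OF xy R(2)[of "inv_circ X y"]] c by simp
    hence uI: "u \<in> ?I" using c by (simp add: ideal_of_def u_def)
    have "(star X (inv_star X y) y, star X (inv_star X y) z) \<in> S"
      using S(4)[OF S(2)[of "inv_star X y"] yz] c by simp
    hence wJ: "w \<in> ?J" using c S(3) by (simp add: ideal_of_def w_def)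
    have uc: "u \<in> carr X" and wc: "w \<in> carr X" using uI wJ IC by auto
    have ux: "circ X u y = x" using c by (simp add: u_def c_assoc)
    have yw: "star X y w = z" using c by (simp add: w_def flip: s_assoc)
    have "circ X u z = circ X u (star X y w)" by (simp add: yw)
    also have "\<dots> = star X (star X x (inv_star X u)) (star X u w)"
      using brace[OF uc c(2) wc] P1[OF uI wJ] P3[OF uI wJ] ux by simp
    also have "\<dots> = star X x w" using c uc wc by (simp add: s_assoc flip: s_assoc[of "inv_star X u"])
    also have "\<dots> = star X (star X x (inv_star X y)) z" using c by (simp add: w_def s_assoc)
    finally show ?thesis by (simp add: u_def)
  qed
  show ?thesis using P1 P2 P3 P4 third by metis
qed

lemma cond_smith:
  assumes cR: "skb_congruence X R" and cS: "skb_congruence X S"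
    and C1: "\<forall>a\<in>ideal_of X R. \<forall>b\<in>ideal_of X S. star X a b = star X b a"
    and C2: "\<forall>a\<in>ideal_of X R. \<forall>b\<in>ideal_of X S. circ X a b = circ X b a"
    and C3: "\<forall>x y z. (x, y) \<in> R \<and> (y, z) \<in> S \<longrightarrow>
               star X (star X x (inv_star X y)) z = circ X (circ X x (inv_circ X y)) z"
  shows "smith_zero X R S"
proof -
  note R = cong_props[OF cR] and S = cong_props[OF cS]
  define p where "p = (\<lambda>(x,y,z). star X (star X x (inv_star X y)) z)"
  have pc: "p (x,y,z) = circ X (circ X x (inv_circ X y)) z" if "(x,y)\<in>R" "(y,z)\<in>S" for x y z
    using C3 that by (simp add: p_def)
  have key_s: "p (star X x x', star X y y', star X z z') = star X (p (x,y,z)) (p (x',y',z'))"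
    if h: "(x,y)\<in>R" "(y,z)\<in>S" "(x',y')\<in>R" "(y',z')\<in>S" for x y z x' y' z'
  proof -
    have c: "x\<in>carr X" "y\<in>carr X" "z\<in>carr X" "x'\<in>carr X" "y'\<in>carr X" "z'\<in>carr X"
      using h R(1) S(1) by auto
    have "(star X x' (inv_star X y'), star X y' (inv_star X y')) \<in> R"
      using R(4)[OF h(3) R(2)[of "inv_star X y'"]] c by simp
    hence aI: "star X x' (inv_star X y') \<in> ideal_of X R" using c by (simp add: ideal_of_def)
    have "(star X (inv_star X y) y, star X (inv_star X y) z) \<in> S"
      using S(4)[OF S(2)[of "inv_star X y"] h(2)] c by simp
    hence bJ: "star X (inv_star X y) z \<in> ideal_of X S" using c S(3) by (simp add: ideal_of_def)
    have com: "star X (star X x' (inv_star X y')) (star X (inv_star X y) z) =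
       star X (star X (inv_star X y) z) (star X x' (inv_star X y'))" using C1 aI bJ by blast
    have inv: "inv_star X (star X y y') = star X (inv_star X y') (inv_star X y)"
      using group.inv_mult_group[OF A, of y y'] c unfolding inv_star_def by simp
    have "p (star X x x', star X y y', star X z z') =
      star X x (star X (star X (star X x' (inv_star X y')) (star X (inv_star X y) z)) z')"
      using c by (simp add: p_def inv s_assoc)
    also have "\<dots> = star X x (star X (star X (star X (inv_star X y) z) (star X x' (inv_star X y'))) z')"
      by (simp add: com)
    also have "\<dots> = star X (p (x,y,z)) (p (x',y',z'))"
      using c by (simp add: p_def s_assoc)
    finally show ?thesis .
  qed
  have key_c: "p (circ X x x', circ X y y', circ X z z') = circ X (p (x,y,z)) (p (x',y',z'))"
    if h: "(x,y)\<in>R" "(y,z)\<in>S" "(x',y')\<in>R" "(y',z')\<in>S" for x y z x' y' z'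
  proof -
    have c: "x\<in>carr X" "y\<in>carr X" "z\<in>carr X" "x'\<in>carr X" "y'\<in>carr X" "z'\<in>carr X"
      using h R(1) S(1) by auto
    have "(circ X x' (inv_circ X y'), circ X y' (inv_circ X y')) \<in> R"
      using R(5)[OF h(3) R(2)[of "inv_circ X y'"]] c by simp
    hence aI: "circ X x' (inv_circ X y') \<in> ideal_of X R" using c by (simp add: ideal_of_def)
    have "(circ X (inv_circ X y) y, circ X (inv_circ X y) z) \<in> S"
      using S(5)[OF S(2)[of "inv_circ X y"] h(2)] c by simp
    hence bJ: "circ X (inv_circ X y) z \<in> ideal_of X S" using c S(3) by (simp add: ideal_of_def)
    have com: "circ X (circ X x' (inv_circ X y')) (circ X (inv_circ X y) z) =
       circ X (circ X (inv_circ X y) z) (circ X x' (inv_circ X y'))" using C2 aI bJ by blast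
    have inv: "inv_circ X (circ X y y') = circ X (inv_circ X y') (inv_circ X y)"
      using group.inv_mult_group[OF M, of y y'] c unfolding inv_circ_def by simp
    have "p (circ X x x', circ X y y', circ X z z') =
      circ X x (circ X (circ X (circ X x' (inv_circ X y')) (circ X (inv_circ X y) z)) z')"
      using c pc[OF R(5)[OF h(1) h(3)] S(5)[OF h(2) h(4)]] by (simp add: inv c_assoc)
    also have "\<dots> = circ X x (circ X (circ X (circ X (inv_circ X y) z) (circ X x' (inv_circ X y'))) z')"
      by (simp add: com)
    also have "\<dots> = circ X (p (x,y,z)) (p (x',y',z'))"
      using c pc[OF h(1,2)] pc[OF h(3,4)] by (simp add: c_assoc)
    finally show ?thesis .
  qed
  have hom: "skb_hom (restr (prod_skb X (prod_skb X X)) (fib_prod R S)) X p"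
    unfolding skb_hom_def
  proof (intro conjI ballI)
    show "p \<in> carr (restr (prod_skb X (prod_skb X X)) (fib_prod R S)) \<rightarrow> carr X"
      using R(1) S(1) by (fastforce simp: restr_def fib_prod_def p_def)
  next
    fix a b assume "a \<in> carr (restr (prod_skb X (prod_skb X X)) (fib_prod R S))"
      "b \<in> carr (restr (prod_skb X (prod_skb X X)) (fib_prod R S))"
    then obtain x y z x' y' z' where ab: "a = (x,y,z)" "b = (x',y',z')"
      and h: "(x,y)\<in>R" "(y,z)\<in>S" "(x',y')\<in>R" "(y',z')\<in>S"
      by (auto simp: restr_def fib_prod_def)
    show "p (star (restr (prod_skb X (prod_skb X X)) (fib_prod R S)) a b) = star X (p a) (p b)"
      using key_s[OF h] by (simp add: ab restr_def prod_skb_def)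
    show "p (circ (restr (prod_skb X (prod_skb X X)) (fib_prod R S)) a b) = circ X (p a) (p b)"
      using key_c[OF h] by (simp add: ab restr_def prod_skb_def)
  qed
  have "\<forall>x y. (x, y) \<in> R \<longrightarrow> p (x, y, y) = x"
    using R(1) by (auto simp: p_def s_assoc)
  moreover have "\<forall>y z. (y, z) \<in> S \<longrightarrow> p (y, y, z) = z"
    using S(1) by (auto simp: p_def)
  ultimately show ?thesis using hom unfolding smith_zero_def by blast
qed

lemma smith_huq:
  assumes cR: "skb_congruence X R" and cS: "skb_congruence X S"
    and H: "smith_zero X R S"
  shows "huq_zero X (ideal_of X R) (ideal_of X S)"
proof -
  note R = cong_props[OF cR] and S = cong_props[OF cS]
  obtain p where hom: "skb_hom (restr (prod_skb X (prod_skb X X)) (fib_prod R S)) X p"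
    and p1: "\<forall>x y. (x, y) \<in> R \<longrightarrow> p (x, y, y) = x" and p2: "\<forall>y z. (y, z) \<in> S \<longrightarrow> p (y, y, z) = z"
    using H unfolding smith_zero_def by blast
  define f where "f = (\<lambda>(u,v). p (u, unit X, v))"
  have mem: "(u, unit X, v) \<in> fib_prod R S" if "u \<in> ideal_of X R" "v \<in> ideal_of X S" for u v
    using that S(3) by (auto simp: ideal_of_def fib_prod_def)
  let ?Q = "restr (prod_skb X (prod_skb X X)) (fib_prod R S)"
  have H2: "\<forall>x\<in>carr ?Q. \<forall>y\<in>carr ?Q. p (star ?Q x y) = star X (p x) (p y) \<and> p (circ ?Q x y) = circ X (p x) (p y)"
    and pin: "p \<in> carr ?Q \<rightarrow> carr X"
    using hom unfolding skb_hom_def by blast+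
  have cQ: "carr ?Q = fib_prod R S" by (simp add: restr_def)
  have sQ: "star ?Q (a1,a2,a3) (b1,b2,b3) = (star X a1 b1, star X a2 b2, star X a3 b3)" for a1 a2 a3 b1 b2 b3
    by (simp add: restr_def prod_skb_def)
  have cQ2: "circ ?Q (a1,a2,a3) (b1,b2,b3) = (circ X a1 b1, circ X a2 b2, circ X a3 b3)" for a1 a2 a3 b1 b2 b3
    by (simp add: restr_def prod_skb_def)
  let ?P = "prod_skb (restr X (ideal_of X R)) (restr X (ideal_of X S))"
  have cP: "carr ?P = ideal_of X R \<times> ideal_of X S" by (simp add: prod_skb_def restr_def)
  have sP: "star ?P (u,v) (u',v') = (star X u u', star X v v')" for u v u' v' by (simp add: prod_skb_def restr_def)
  have cP2: "circ ?P (u,v) (u',v') = (circ X u u', circ X v v')" for u v u' v' by (simp add: prod_skb_def restr_def)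
  have uu: "star X (unit X) (unit X) = unit X" "circ X (unit X) (unit X) = unit X" by simp_all
  have "skb_hom ?P X f"
    unfolding skb_hom_def
  proof (intro conjI ballI)
    show "f \<in> carr ?P \<rightarrow> carr X"
    proof
      fix a assume "a \<in> carr ?P"
      then obtain u v where "a = (u,v)" "u \<in> ideal_of X R" "v \<in> ideal_of X S" using cP by auto
      thus "f a \<in> carr X" using mem pin cQ by (auto simp: f_def)
    qed
  next
    fix a b assume a: "a \<in> carr ?P" and b: "b \<in> carr ?P"
    then obtain u v u' v' where ab: "a = (u,v)" "b = (u',v')" and
      m: "(u, unit X, v) \<in> carr ?Q" "(u', unit X, v') \<in> carr ?Q"
      using mem cP cQ by auto
    have e1: "p (star ?Q (u, unit X, v) (u', unit X, v')) = star X (p (u, unit X, v)) (p (u', unit X, v'))"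
      using H2 m by blast
    have e2: "p (circ ?Q (u, unit X, v) (u', unit X, v')) = circ X (p (u, unit X, v)) (p (u', unit X, v'))"
      using H2 m by blast
    show "f (star ?P a b) = star X (f a) (f b)"
      using e1 by (simp only: ab sP sQ uu f_def split)
    show "f (circ ?P a b) = circ X (f a) (f b)"
      using e2 by (simp only: ab cP2 cQ2 uu f_def split)
  qed
  moreover have "\<forall>u\<in>ideal_of X R. f (u, unit X) = u" using p1 by (auto simp: f_def ideal_of_def)
  moreover have "\<forall>v\<in>ideal_of X S. f (unit X, v) = v" using p2 S(3) by (auto simp: f_def ideal_of_def)
  ultimately show ?thesis unfolding huq_zero_def by blast
qed

end

lemma huq_smith_gen:
  assumes "skew_brace Y" "skb_congruence Y R" "skb_congruence Y S" "huq_zero Y (ideal_of Y R) (ideal_of Y S)"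
  shows "smith_zero Y R S"
proof -
  interpret SB Y by (unfold_locales) (rule assms(1))
  show ?thesis using huq_cond[OF assms(2-4)] cond_smith[OF assms(2,3)] by blast
qed

theorem proposition3p10:
  fixes X :: "'a skb" and R S :: "('a \<times> 'a) set"
  assumes "skew_brace X" and "skb_congruence X R" and "skb_congruence X S"
  shows "(huq_zero X (ideal_of X R) (ideal_of X S) \<longleftrightarrow>
           ((\<forall>a\<in>ideal_of X R. \<forall>b\<in>ideal_of X S. star X a b = star X b a) \<and>
            (\<forall>a\<in>ideal_of X R. \<forall>b\<in>ideal_of X S. circ X a b = circ X b a) \<and>
            (\<forall>x y z. (x, y) \<in> R \<and> (y, z) \<in> S \<longrightarrow>
               star X (star X x (inv_star X y)) z = circ X (circ X x (inv_circ X y)) z))) \<and>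
         (huq_zero X (ideal_of X R) (ideal_of X S) \<longleftrightarrow> smith_zero X R S) \<and>
         (\<forall>(Y :: 'b skb) R' S'. skew_brace Y \<and> skb_congruence Y R' \<and> skb_congruence Y S' \<and>
            huq_zero Y (ideal_of Y R') (ideal_of Y S') \<longrightarrow> smith_zero Y R' S')"
proof -
  interpret SB X by (unfold_locales) (rule assms(1))
  show ?thesis
    using huq_cond[OF assms(2,3)] cond_smith[OF assms(2,3)] smith_huq[OF assms(2,3)] huq_smith_gen
    by blast
qed

end
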